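(* Let $(\Omega,\mathcal F)$ be a measurable space, $X$ a bounded measurable function and $w$ a capacity. Then $\alpha\mapsto Q^w_\alpha(X)$ is left-continuous on $(0,1]$ and $\alpha\mapsto\overline Q^w_\alpha(X)$ is right-continuous on $[0,1)$.
   Context: A capacity is an increasing function $w:\mathcal F\to\mathbb R$ (i.e. $w(A)\le w(B)$ for $A\subseteq B$) with $w(\varnothing)=0$, $w(\Omega)=1$. $Q^w_\alpha(X)=\inf\{x\in\mathbb R: w(X\ge x)\le1-\alpha\}$ for $\alpha\in(0,1]$, and $\overline Q^w_\alpha(X)=\inf\{x\in\mathbb R: w(X\ge x)<1-\alpha\}$ for $\alpha\in[0,1)$. *)

theory Defs
  imports "HOL-Analysis.Analysis"
begin

definition capacity :: "'a measure \<Rightarrow> ('a set \<Rightarrow> real) \<Rightarrow> bool" where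
  "capacity M w \<longleftrightarrow>
     (\<forall>A\<in>sets M. \<forall>B\<in>sets M. A \<subseteq> B \<longrightarrow> w A \<le> w B) \<and> w {} = 0 \<and> w (space M) = 1"

definition lower_quantile :: "'a measure \<Rightarrow> ('a set \<Rightarrow> real) \<Rightarrow> ('a \<Rightarrow> real) \<Rightarrow> real \<Rightarrow> real" where
  "lower_quantile M w X \<alpha> = Inf {x. w {\<omega>\<in>space M. X \<omega> \<ge> x} \<le> 1 - \<alpha>}"

definition upper_quantile :: "'a measure \<Rightarrow> ('a set \<Rightarrow> real) \<Rightarrow> ('a \<Rightarrow> real) \<Rightarrow> real \<Rightarrow> real" where
  "upper_quantile M w X \<alpha> = Inf {x. w {\<omega>\<in>space M. X \<omega> \<ge> x} < 1 - \<alpha>}"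

end

theory Submission
  imports Defs
begin

theorem proposition6:
  fixes M :: "'a measure" and X :: "'a \<Rightarrow> real" and w :: "'a set \<Rightarrow> real"
  assumes "X \<in> borel_measurable M"
    and "bounded (X ` space M)"
    and "capacity M w"
  shows "(\<forall>a\<in>{0<..1}. continuous (at_left a) (lower_quantile M w X))
       \<and> (\<forall>a\<in>{0..<1}. continuous (at_right a) (upper_quantile M w X))"
proof -
  define f where "f x = w {\<omega>\<in>space M. X \<omega> \<ge> x}" for x
  have meas: "{\<omega>\<in>space M. X \<omega> \<ge> x} \<in> sets M" for x
    using assms(1) borel_measurable_iff_ge by blast
  have mono: "x \<le> y \<Longrightarrow> f y \<le> f x" for x y
  proof -
    assume "x \<le> y"
    then have "{\<omega>\<in>space M. X \<omega> \<ge> y} \<subseteq> {\<omega>\<in>space M. X \<omega> \<ge> x}" by auto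
    then show ?thesis using assms(3) meas[of x] meas[of y] unfolding capacity_def f_def by blast
  qed
  obtain B where B: "\<And>\<omega>. \<omega> \<in> space M \<Longrightarrow> \<bar>X \<omega>\<bar> \<le> B"
    using assms(2) unfolding bounded_iff by auto
  have low: "x \<le> -B \<Longrightarrow> f x = 1" for x
  proof -
    assume "x \<le> -B"
    then have "{\<omega>\<in>space M. X \<omega> \<ge> x} = space M" using B by force
    then show ?thesis using assms(3) unfolding f_def capacity_def by simp
  qed
  have high: "x > B \<Longrightarrow> f x = 0" for x
  proof -
    assume "x > B"
    then have e: "{\<omega>\<in>space M. X \<omega> \<ge> x} = {}" using B by force
    show ?thesis using assms(3) unfolding f_def capacity_def by (simp only: e)
  qed
  have nonneg: "f x \<ge> 0" for x
    using assms(3) meas[of x] unfolding capacity_def f_def by (metis empty_subsetI sets.empty_sets)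
  have L: "lower_quantile M w X a = Inf {x. f x \<le> 1 - a}" for a
    unfolding lower_quantile_def f_def by simp
  have U: "upper_quantile M w X a = Inf {x. f x < 1 - a}" for a
    unfolding upper_quantile_def f_def by simp
  have part1: "continuous (at_left a) (lower_quantile M w X)" if a: "0 < a" "a \<le> 1" for a
  proof -
    define S where "S b = {x. f x \<le> 1 - b}" for b
    have LS: "lower_quantile M w X b = Inf (S b)" for b using L S_def by simp
    have Sne: "b \<le> 1 \<Longrightarrow> B + 1 \<in> S b" for b using high[of "B+1"] unfolding S_def by simp
    have Sbdd: "b > 0 \<Longrightarrow> bdd_below (S b)" for b
      unfolding S_def bdd_below_def
    proof (intro exI[of _ "-B"] ballI)
      fix x assume "b > 0" "x \<in> {x. f x \<le> 1 - b}"
      then show "-B \<le> x" using low[of x] by (cases "x \<le> -B") auto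
    qed
    show ?thesis
      unfolding continuous_within
    proof (rule order_tendstoI)
      fix y assume y: "y < lower_quantile M w X a"
      obtain y' where y': "y < y'" "y' < Inf (S a)" using y LS dense by metis
      have ny: "\<not> f y' \<le> 1 - a"
      proof
        assume "f y' \<le> 1 - a"
        then have "y' \<in> S a" unfolding S_def by simp
        then have "Inf (S a) \<le> y'" using Sbdd a by (simp add: cInf_lower)
        then show False using y' by simp
      qed
      show "\<forall>\<^sub>F b in at_left a. y < lower_quantile M w X b"
        unfolding eventually_at_left_field
      proof (intro exI[of _ "max 0 (1 - f y')"] conjI allI impI)
        show "max 0 (1 - f y') < a" using a ny by simp
        fix b assume b: "max 0 (1 - f y') < b" "b < a"
        have "y' \<le> Inf (S b)"
        proof (rule cInf_greatest)
          show "S b \<noteq> {}" using Sne[of b] b a by auto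
          fix x assume "x \<in> S b"
          then have "f x \<le> 1 - b" unfolding S_def by simp
          then show "y' \<le> x" using mono[of x y'] b by (cases "x \<le> y'") auto
        qed
        then show "y < lower_quantile M w X b" using LS y' by simp
      qed
    next
      fix y assume y: "y > lower_quantile M w X a"
      show "\<forall>\<^sub>F b in at_left a. lower_quantile M w X b < y"
        unfolding eventually_at_left_field
      proof (intro exI[of _ 0] conjI allI impI)
        show "0 < a" using a by simp
        fix b assume b: "0 < b" "b < a"
        have "Inf (S b) \<le> Inf (S a)"
        proof (rule cInf_superset_mono)
          show "S a \<noteq> {}" using Sne a by auto
          show "bdd_below (S b)" using Sbdd b by simp
          show "S a \<subseteq> S b" unfolding S_def using b by auto
        qed
        then show "lower_quantile M w X b < y" using LS y by simp
      qed
    qed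
  qed
  have part2: "continuous (at_right a) (upper_quantile M w X)" if a: "0 \<le> a" "a < 1" for a
  proof -
    define T where "T b = {x. f x < 1 - b}" for b
    have UT: "upper_quantile M w X b = Inf (T b)" for b using U T_def by simp
    have Tne: "b < 1 \<Longrightarrow> B + 1 \<in> T b" for b using high[of "B+1"] unfolding T_def by simp
    have Tbdd: "b \<ge> 0 \<Longrightarrow> bdd_below (T b)" for b
      unfolding T_def bdd_below_def
    proof (intro exI[of _ "-B"] ballI)
      fix x assume "b \<ge> 0" "x \<in> {x. f x < 1 - b}"
      then show "-B \<le> x" using low[of x] by (cases "x \<le> -B") auto
    qed
    show ?thesis
      unfolding continuous_within
    proof (rule order_tendstoI)
      fix y assume y: "y < upper_quantile M w X a"
      show "\<forall>\<^sub>F b in at_right a. y < upper_quantile M w X b"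
        unfolding eventually_at_right_field
      proof (intro exI[of _ 1] conjI allI impI)
        show "a < 1" using a by simp
        fix b assume b: "a < b" "b < 1"
        have "Inf (T a) \<le> Inf (T b)"
        proof (rule cInf_superset_mono)
          show "T b \<noteq> {}" using Tne b by auto
          show "bdd_below (T a)" using Tbdd a by simp
          show "T b \<subseteq> T a" unfolding T_def using b by auto
        qed
        then show "y < upper_quantile M w X b" using UT y by simp
      qed
    next
      fix y assume y: "y > upper_quantile M w X a"
      have "T a \<noteq> {}" using Tne a by auto
      moreover have "Inf (T a) < y" using y UT by simp
      ultimately obtain x where x: "x \<in> T a" "x < y" using cInf_less_iff[of "T a" y] Tbdd[OF a(1)] by blast
      have fx: "f x < 1 - a" using x T_def by simp
      show "\<forall>\<^sub>F b in at_right a. upper_quantile M w X b < y"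
        unfolding eventually_at_right_field
      proof (intro exI[of _ "1 - f x"] conjI allI impI)
        show "a < 1 - f x" using fx by simp
        fix b assume b: "a < b" "b < 1 - f x"
        have "x \<in> T b" unfolding T_def using b by simp
        then have "Inf (T b) \<le> x" using Tbdd a b by (simp add: cInf_lower)
        then show "upper_quantile M w X b < y" using UT x by simp
      qed
    qed
  qed
  show ?thesis using part1 part2 by auto
qed

end
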